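(* Let $(\mathcal X,\rho)$ be a metric space, $\{x_i^n:1\le i\le n,\ n\ge1\}\subset\mathcal X$, and $A_n=\{x_i^n:1\le i\le n\}$ (counted with indices). Assume $\hat R_n=\frac1n\sum_{i=1}^n\delta_{x_i^n}$ converges weakly to a probability measure $R$ whose support $\mathcal Y$ satisfies $R(\mathcal Y)=1$. Then there exist subsets $B_n\subset A_n$, and $C_n=A_n\setminus B_n$, such that: (1) $\mathrm{card}(B_n)/n\to1$; (2) $\frac1{\mathrm{card}(B_n)}\sum_{x_i^n\in B_n}\delta_{x_i^n}\to R$ weakly; (3) $\sup\{\rho(x,\mathcal Y):x\in B_n\}\to0$ as $n\to\infty$. In particular $\mathrm{card}(C_n)/n\to0$. *)

theory Defs
  imports "HOL-Probability.Probability"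
begin

definition bcont :: "('a::metric_space \<Rightarrow> real) \<Rightarrow> bool" where
  "bcont f \<longleftrightarrow> continuous_on UNIV f \<and> bounded (range f)"

text \<open>Integral of f against the normalised empirical measure
  (1/card I) * sum of Dirac masses at the points y i, i in I (counted with indices).\<close>
definition emp_int :: "(nat \<Rightarrow> 'a) \<Rightarrow> nat set \<Rightarrow> ('a \<Rightarrow> real) \<Rightarrow> real" where
  "emp_int y I f = (\<Sum>i\<in>I. f (y i)) / real (card I)"

definition emp_weak_conv :: "(nat \<Rightarrow> nat \<Rightarrow> 'a::metric_space) \<Rightarrow> (nat \<Rightarrow> nat set) \<Rightarrow> 'a measure \<Rightarrow> bool" where
  "emp_weak_conv y I R \<longleftrightarrow>
     (\<forall>f. bcont f \<longrightarrow> (\<lambda>n. emp_int (y n) (I n) f) \<longlonglongrightarrow> (\<integral>z. f z \<partial>R))"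

definition msupport :: "'a::metric_space measure \<Rightarrow> 'a set" where
  "msupport R = {y. \<forall>e>0. emeasure R (ball y e) > 0}"

end

theory Submission
  imports Defs
begin

lemma flim_aux:
  fixes r :: "nat \<Rightarrow> nat"
  assumes rlim: "filterlim r at_top sequentially"
  shows "filterlim (\<lambda>n. real (r n) + 1) at_top sequentially"
proof -
  have "filterlim (\<lambda>n. 1 + real (r n)) at_top sequentially"
    by (rule filterlim_tendsto_add_at_top[OF tendsto_const])
       (rule filterlim_compose[OF filterlim_real_sequentially rlim])
  thus ?thesis by (simp add: add.commute)
qed

lemma diag_seq:
  fixes a :: "nat \<Rightarrow> nat \<Rightarrow> real"
  assumes lim: "\<And>k. (\<lambda>n. a k n) \<longlonglongrightarrow> 0"
  shows "\<exists>r. filterlim r at_top sequentially \<and> (\<lambda>n. a (r n) n) \<longlonglongrightarrow> 0"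
proof -
  have "\<forall>k. \<exists>N. \<forall>n\<ge>N. norm (a k n - 0) < 1/(real k+1)"
    using LIMSEQ_D[OF lim] by simp
  hence "\<forall>k. \<exists>N. \<forall>n\<ge>N. \<bar>a k n\<bar> < 1/(real k+1)" by simp
  then obtain N where N: "\<And>k n. n \<ge> N k \<Longrightarrow> \<bar>a k n\<bar> < 1/(real k+1)" by metis
  define r where "r n = Max ({k. k \<le> n \<and> N k \<le> n} \<union> {0})" for n
  have fin: "finite ({k. k \<le> n \<and> N k \<le> n} \<union> {0})" for n by auto
  have r_ge: "k \<le> r n" if "k \<le> n" "N k \<le> n" for k n
    unfolding r_def using fin that by (intro Max_ge) auto
  have r_in: "r n \<in> {k. k \<le> n \<and> N k \<le> n} \<union> {0}" for n
    unfolding r_def using fin by (intro Max_in) auto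
  have rlim: "filterlim r at_top sequentially"
    unfolding filterlim_at_top
  proof
    fix Z
    show "\<forall>\<^sub>F n in sequentially. Z \<le> r n"
      using eventually_ge_at_top[of "max Z (N Z)"] by eventually_elim (auto intro: r_ge)
  qed
  have "filterlim (\<lambda>n. real (r n) + 1) at_top sequentially"
    by (rule flim_aux[OF rlim])
  hence inv: "(\<lambda>n. inverse (real (r n) + 1)) \<longlonglongrightarrow> 0"
    by (rule tendsto_inverse_0_at_top)
  have "(\<lambda>n. a (r n) n) \<longlonglongrightarrow> 0"
  proof (rule Lim_null_comparison[OF _ inv])
    show "\<forall>\<^sub>F n in sequentially. norm (a (r n) n) \<le> inverse (real (r n) + 1)"
      using eventually_ge_at_top[of "N 0"]
    proof eventually_elim
      case (elim n)
      have "N (r n) \<le> n" using r_in[of n] elim by auto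
      from N[OF this] show ?case by (simp add: field_simps)
    qed
  qed
  with rlim show ?thesis by blast
qed

lemma diff_bound:
  fixes SB SC M b c :: real
  assumes "b > 0" "c \<ge> 0" "\<bar>SB\<bar> \<le> M * b" "\<bar>SC\<bar> \<le> M * c"
  shows "\<bar>SB / b - (SB + SC) / (b + c)\<bar> \<le> 2 * M * c / (b + c)"
proof -
  have bc: "b + c > 0" using assms by simp
  have "SB / b - (SB + SC) / (b + c) = (SB * c / b - SC) / (b + c)"
    using assms bc by (simp add: field_simps)
  also have "\<bar>\<dots>\<bar> = \<bar>SB * c / b - SC\<bar> / (b + c)" using bc by simp
  also have "\<dots> \<le> 2 * M * c / (b + c)"
  proof (rule divide_right_mono)
    have "\<bar>SB * c / b\<bar> = \<bar>SB\<bar> * c / b" using assms by (simp add: abs_mult)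
    also have "\<dots> \<le> M * b * c / b" using assms
      by (intro divide_right_mono mult_right_mono) auto
    also have "\<dots> = M * c" using assms by simp
    finally have "\<bar>SB * c / b\<bar> \<le> M * c" .
    thus "\<bar>SB * c / b - SC\<bar> \<le> 2 * M * c" using assms(4) by linarith
  qed (use bc in simp)
  finally show ?thesis .
qed

theorem proposition3p1:
  fixes x :: "nat \<Rightarrow> nat \<Rightarrow> 'a::metric_space" and R :: "'a measure"
  assumes "prob_space R" and "sets R = sets borel"
    and "emp_weak_conv x (\<lambda>n. {1..n}) R"
    and "measure R (msupport R) = 1"
  shows "\<exists>B :: nat \<Rightarrow> nat set.
           (\<forall>n. B n \<subseteq> {1..n}) \<and>
           (\<lambda>n. real (card (B n)) / real n) \<longlonglongrightarrow> 1 \<and>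
           emp_weak_conv x B R \<and>
           (\<lambda>n. SUP i\<in>B n. ereal (infdist (x n i) (msupport R))) \<longlonglongrightarrow> 0 \<and>
           (\<lambda>n. real (card ({1..n} - B n)) / real n) \<longlonglongrightarrow> 0"
proof -
  define Y where "Y = msupport R"
  define d where "d n i = infdist (x n i) Y" for n i
  define g where "g k z = min 1 ((real k + 1) * infdist z Y)" for k z
  define a where "a k n = real (card {i\<in>{1..n}. d n i \<ge> 1/(real k+1)}) / real n" for k n
  have AEY: "AE z in R. z \<in> Y" using prob_space.AE_prob_1[OF assms(1)] assms(4) Y_def by blast
  have bc: "bcont (g k)" for k
  proof -
    have "continuous_on UNIV (g k)" unfolding g_def
      by (intro continuous_intros continuous_on_infdist)
    moreover have "bounded (range (g k))" unfolding bounded_iff g_def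
      by (rule exI[of _ 1]) (auto simp: infdist_nonneg)
    ultimately show ?thesis unfolding bcont_def by simp
  qed
  have int0: "(\<integral>z. g k z \<partial>R) = 0" for k
  proof -
    have "continuous_on UNIV (g k)" using bc[of k] by (simp add: bcont_def)
    hence "g k \<in> borel_measurable borel" by (rule borel_measurable_continuous_onI)
    hence m: "g k \<in> borel_measurable R" using assms(2) measurable_cong_sets by blast
    have "(\<integral>z. g k z \<partial>R) = (\<integral>z. 0 \<partial>R)"
      using AEY by (intro integral_cong_AE[OF m]) (auto simp: g_def infdist_zero)
    thus ?thesis by simp
  qed
  have alim: "(\<lambda>n. a k n) \<longlonglongrightarrow> 0" for k
  proof (rule tendsto_sandwich[of "\<lambda>_. 0" _ _ "\<lambda>n. emp_int (x n) {1..n} (g k)"])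
    show "\<forall>\<^sub>F n in sequentially. 0 \<le> a k n" by (simp add: a_def)
    show "\<forall>\<^sub>F n in sequentially. a k n \<le> emp_int (x n) {1..n} (g k)"
    proof (rule always_eventually, rule allI)
      fix n
      let ?S = "{i\<in>{1..n}. d n i \<ge> 1/(real k+1)}"
      have "real (card ?S) = (\<Sum>i\<in>?S. g k (x n i))"
      proof -
        have "(\<Sum>i\<in>?S. g k (x n i)) = (\<Sum>i\<in>?S. 1)"
        proof (rule sum.cong)
          fix i assume "i \<in> ?S"
          hence "d n i \<ge> 1/(real k+1)" by simp
          hence "(real k + 1) * d n i \<ge> 1" by (simp add: field_simps)
          thus "g k (x n i) = 1" by (simp add: g_def d_def)
        qed simp
        thus ?thesis by simp
      qed
      also have "\<dots> \<le> (\<Sum>i\<in>{1..n}. g k (x n i))"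
        by (rule sum_mono2) (auto simp: g_def infdist_nonneg)
      finally show "a k n \<le> emp_int (x n) {1..n} (g k)"
        unfolding a_def emp_int_def by (simp add: divide_right_mono)
    qed
    show "(\<lambda>n. emp_int (x n) {1..n} (g k)) \<longlonglongrightarrow> 0"
    proof -
      have "(\<lambda>n. emp_int (x n) {1..n} (g k)) \<longlonglongrightarrow> (\<integral>z. g k z \<partial>R)"
        using assms(3) bc[of k] unfolding emp_weak_conv_def by blast
      thus ?thesis using int0[of k] by simp
    qed
  qed simp
  obtain r where rlim: "filterlim r at_top sequentially" and ar: "(\<lambda>n. a (r n) n) \<longlonglongrightarrow> 0"
    using diag_seq[of a, OF alim] by blast
  define B where "B n = {i\<in>{1..n}. d n i < 1/(real (r n)+1)}" for n
  have Bsub: "B n \<subseteq> {1..n}" for n by (auto simp: B_def)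
  have Ceq: "{1..n} - B n = {i\<in>{1..n}. d n i \<ge> 1/(real (r n)+1)}" for n
    by (auto simp: B_def)
  have Clim: "(\<lambda>n. real (card ({1..n} - B n)) / real n) \<longlonglongrightarrow> 0"
    unfolding Ceq using ar unfolding a_def .
  have cardBC: "real (card (B n)) + real (card ({1..n} - B n)) = real n" for n
  proof -
    have "card (B n) + card ({1..n} - B n) = card {1..n}"
      using card_Diff_subset[OF finite_subset[OF Bsub[of n]] Bsub[of n]]
        card_mono[OF _ Bsub[of n]] by simp
    thus ?thesis by (metis card_atLeastAtMost diff_Suc_1 of_nat_add)
  qed
  have Bfrac: "real (card (B n)) / real n = 1 - real (card ({1..n} - B n)) / real n"
    if "n \<ge> 1" for n
    using cardBC[of n] that by (simp add: field_simps)
  have Blim: "(\<lambda>n. real (card (B n)) / real n) \<longlonglongrightarrow> 1"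
  proof -
    have "(\<lambda>n. 1 - real (card ({1..n} - B n)) / real n) \<longlonglongrightarrow> 1 - 0"
      by (intro tendsto_intros Clim)
    hence "(\<lambda>n. 1 - real (card ({1..n} - B n)) / real n) \<longlonglongrightarrow> 1" by simp
    thus ?thesis
      by (rule Lim_transform_eventually)
         (use eventually_ge_at_top[of 1] in \<open>eventually_elim, simp add: Bfrac\<close>)
  qed
  have Bpos: "\<forall>\<^sub>F n in sequentially. card (B n) > 0"
  proof -
    have "\<forall>\<^sub>F n in sequentially. real (card (B n)) / real n > 1/2"
      using Blim by (rule order_tendstoD) simp
    thus ?thesis by eventually_elim (rule ccontr, simp)
  qed
  have weak: "emp_weak_conv x B R"
    unfolding emp_weak_conv_def
  proof (intro allI impI)
    fix f :: "'a \<Rightarrow> real" assume f: "bcont f"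
    then obtain M where M: "\<And>z. \<bar>f z\<bar> \<le> M"
      unfolding bcont_def bounded_iff by auto
    have A: "(\<lambda>n. emp_int (x n) {1..n} f) \<longlonglongrightarrow> (\<integral>z. f z \<partial>R)"
      using assms(3) f unfolding emp_weak_conv_def by blast
    have D: "(\<lambda>n. emp_int (x n) (B n) f - emp_int (x n) {1..n} f) \<longlonglongrightarrow> 0"
    proof (rule Lim_null_comparison)
      have "(\<lambda>n. 2 * M * (real (card ({1..n} - B n)) / real n)) \<longlonglongrightarrow> 2 * M * 0"
        by (intro tendsto_intros Clim)
      thus "(\<lambda>n. 2 * M * real (card ({1..n} - B n)) / real n) \<longlonglongrightarrow> 0" by simp
      show "\<forall>\<^sub>F n in sequentially. norm (emp_int (x n) (B n) f - emp_int (x n) {1..n} f)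
              \<le> 2 * M * real (card ({1..n} - B n)) / real n"
        using Bpos
      proof eventually_elim
        case (elim n)
        let ?C = "{1..n} - B n"
        have finB: "finite (B n)" using finite_subset[OF Bsub] by blast
        have sumeq: "(\<Sum>i\<in>{1..n}. f (x n i)) = (\<Sum>i\<in>B n. f (x n i)) + (\<Sum>i\<in>?C. f (x n i))"
          using sum.subset_diff[OF Bsub[of n]] by (simp add: add.commute)
        have b1: "\<bar>\<Sum>i\<in>B n. f (x n i)\<bar> \<le> M * real (card (B n))"
        proof -
          have "\<bar>\<Sum>i\<in>B n. f (x n i)\<bar> \<le> (\<Sum>i\<in>B n. \<bar>f (x n i)\<bar>)" by (rule sum_abs)
          also have "\<dots> \<le> (\<Sum>i\<in>B n. M)" by (rule sum_mono) (rule M)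
          also have "\<dots> = M * real (card (B n))" by simp
          finally show ?thesis .
        qed
        have b2: "\<bar>\<Sum>i\<in>?C. f (x n i)\<bar> \<le> M * real (card ?C)"
        proof -
          have "\<bar>\<Sum>i\<in>?C. f (x n i)\<bar> \<le> (\<Sum>i\<in>?C. \<bar>f (x n i)\<bar>)" by (rule sum_abs)
          also have "\<dots> \<le> (\<Sum>i\<in>?C. M)" by (rule sum_mono) (rule M)
          also have "\<dots> = M * real (card ?C)" by simp
          finally show ?thesis .
        qed
        have "norm (emp_int (x n) (B n) f - emp_int (x n) {1..n} f)
            = \<bar>(\<Sum>i\<in>B n. f (x n i)) / real (card (B n)) -
               ((\<Sum>i\<in>B n. f (x n i)) + (\<Sum>i\<in>?C. f (x n i))) / (real (card (B n)) + real (card ?C))\<bar>"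
          unfolding emp_int_def using cardBC[of n] sumeq by simp
        also have "\<dots> \<le> 2 * M * real (card ?C) / (real (card (B n)) + real (card ?C))"
          by (rule diff_bound) (use elim b1 b2 in auto)
        finally show ?case using cardBC[of n] by simp
      qed
    qed
    have "(\<lambda>n. emp_int (x n) {1..n} f + (emp_int (x n) (B n) f - emp_int (x n) {1..n} f))
           \<longlonglongrightarrow> (\<integral>z. f z \<partial>R) + 0"
      by (intro tendsto_intros A D)
    thus "(\<lambda>n. emp_int (x n) (B n) f) \<longlonglongrightarrow> (\<integral>z. f z \<partial>R)" by simp
  qed
  have suplim: "(\<lambda>n. SUP i\<in>B n. ereal (d n i)) \<longlonglongrightarrow> 0"
  proof (rule tendsto_sandwich[of "\<lambda>_. 0" _ _ "\<lambda>n. ereal (inverse (real (r n) + 1))"])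
    show "\<forall>\<^sub>F n in sequentially. 0 \<le> (SUP i\<in>B n. ereal (d n i))"
      using Bpos
    proof eventually_elim
      case (elim n)
      then obtain i where "i \<in> B n" by (metis card.empty ex_in_conv less_irrefl)
      thus ?case by (rule SUP_upper2) (simp add: d_def infdist_nonneg)
    qed
    show "\<forall>\<^sub>F n in sequentially. (SUP i\<in>B n. ereal (d n i)) \<le> ereal (inverse (real (r n) + 1))"
      by (rule always_eventually, rule allI, rule SUP_least) (auto simp: B_def field_simps)
    have "filterlim (\<lambda>n. real (r n) + 1) at_top sequentially"
      by (rule flim_aux[OF rlim])
    hence "(\<lambda>n. inverse (real (r n) + 1)) \<longlonglongrightarrow> 0"
      by (rule tendsto_inverse_0_at_top)
    hence "(\<lambda>n. ereal (inverse (real (r n) + 1))) \<longlonglongrightarrow> ereal 0"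
      by (rule tendsto_ereal)
    thus "(\<lambda>n. ereal (inverse (real (r n) + 1))) \<longlonglongrightarrow> 0" by (simp add: zero_ereal_def)
  qed simp
  have suplim': "(\<lambda>n. SUP i\<in>B n. ereal (infdist (x n i) (msupport R))) \<longlonglongrightarrow> 0"
    using suplim unfolding d_def Y_def .
  show ?thesis using Bsub Blim weak suplim' Clim by blast
qed

end
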